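(* Let $T>0$, let $\eta$ be a low path of type $w_0$, ${\bf i}=(i_1,\dots,i_m)$ a reduced word for $w_0$ and $(t_1,\dots,t_m)\in\mathbb R_{>0}^m$. There is a unique $\pi\in\mathcal C_0([0,T],\mathfrak a)$ such that, writing $\eta_0=\pi$ and $\eta_j=e^{-\infty}_{s_{i_1}\cdots s_{i_j}}\pi$: $e^{-\infty}_{w_0}\pi=\eta$, $\eta_j=e^{-\infty}_{\alpha_{i_j}}\eta_{j-1}$, and $t_j=1/\int_0^Te^{-\alpha_{i_j}(\eta_{j-1}(s))}ds$ for $j=1,\dots,m$. It is given by $\pi=T_z\eta$ with $z=x_{i_1}(t_1)\cdots x_{i_m}(t_m)$.
   Context: $G$ is a simply-connected complex semisimple Lie group, $\Delta=\{\alpha_i\}$ simple roots, $\mathfrak a$ the real Cartan subalgebra, $(e_\alpha,f_\alpha,\alpha^\vee)$ Chevalley generators, $x_i(t)=\exp(te_{\alpha_i})$, $W$ the Weyl group with length $\ell$ and longest element $w_0$. $\rho^\vee=\sum_\alpha\omega^\vee_\alpha$, $(\omega^\vee_\alpha)$ the basis of $\mathfrak a$ dual to the simple roots. Constants $c_w$: $c_e=0$, and $c_w=s_\alpha c_u-\log((u\alpha)(\rho^\vee))\alpha^\vee$ whenever $w=us_\alpha$, $\ell(w)=\ell(u)+1$ (independent of decomposition). A low path of type $w$ is a continuous $\pi:[0,T)\to\mathfrak a$ with $\pi(0)=0$ and $\pi(t)=C_\pi+\log(T-t)(\rho^\vee-w^{-1}\rho^\vee)+c_w+o(1)$ as $t\to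 T$ for some $C_\pi\in\mathfrak a$. $e^{-\infty}_\alpha\pi(t)=\pi(t)+\log(1-\int_0^te^{-\alpha(\pi)}/\int_0^Te^{-\alpha(\pi)})\alpha^\vee$, $0\le t<T$; $e^{-\infty}_w=e^{-\infty}_{\alpha_{j_l}}\circ\cdots\circ e^{-\infty}_{\alpha_{j_1}}$ for reduced $w=s_{j_1}\cdots s_{j_l}$. For $c>0$, $T_{x_\alpha(c)}\eta(t)=\eta(t)+\log(1+c\int_0^te^{-\alpha(\eta(s))}ds)\alpha^\vee$, and $T_z=T_{x_{i_1}(t_1)}\circ\cdots\circ T_{x_{i_m}(t_m)}$ for $z=x_{i_1}(t_1)\cdots x_{i_m}(t_m)$ (equivalently $T_z\eta(t)=\log[zB_t(\eta)]_0$, with $[\cdot]_0$ the torus part of the Gauss decomposition and $B_t$ the flow $B_t(\eta)=\big(\sum_k\sum_{j}\int_{t\ge t_k\ge\dots\ge t_1\ge0}e^{-\sum_r\alpha_{j_r}(\eta(t_r))}f_{j_1}\cdots f_{j_k}\big)e^{\eta(t)}$). $\mathcal C_0([0,T],\mathfrak a)$: continuous paths on $[0,T]$ with $\pi(0)=0$. *)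

theory Defs
  imports "HOL-Analysis.Analysis"
begin

text \<open>Coordinates: the real Cartan subalgebra a is identified with real^'n, 'n indexing
the simple roots, via x |-> (alpha_i(x))_i.  So alpha_i(x) = x$i, the coroot alpha_i^vee
has coordinates (alpha_j(alpha_i^vee))_j = row i of the Cartan matrix A
(A$i$j = alpha_j(alpha_i^vee)), and rho^vee = (1,...,1).\<close>

definition cartan_finite :: "real^'n^'n \<Rightarrow> bool" where
  "cartan_finite A \<longleftrightarrow>
     (\<forall>i. A$i$i = 2) \<and> (\<forall>i j. i \<noteq> j \<longrightarrow> A$i$j \<le> 0) \<and> (\<forall>i j. A$i$j \<in> \<int>) \<and>
     (\<exists>d::real^'n. (\<forall>i. d$i > 0) \<and> (\<forall>i j. d$i * A$i$j = d$j * A$j$i) \<and>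
        (\<forall>x::real^'n. x \<noteq> 0 \<longrightarrow> (\<Sum>i\<in>UNIV. \<Sum>j\<in>UNIV. x$i * d$i * A$i$j * x$j) > 0))"

definition coroot :: "real^'n^'n \<Rightarrow> 'n \<Rightarrow> real^'n" where
  "coroot A i = A $ i"

definition rhov :: "real^'n" where
  "rhov = (\<chi> i. 1)"

definition sref :: "real^'n^'n \<Rightarrow> 'n \<Rightarrow> real^'n \<Rightarrow> real^'n" where
  "sref A i x = x - (x$i) *\<^sub>R coroot A i"

fun wmap :: "real^'n^'n \<Rightarrow> 'n list \<Rightarrow> real^'n \<Rightarrow> real^'n" where
  "wmap A [] = id"
| "wmap A (j # js) = sref A j \<circ> wmap A js"

definition weyl :: "real^'n^'n \<Rightarrow> (real^'n \<Rightarrow> real^'n) set" where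
  "weyl A = range (wmap A)"

definition wlen :: "real^'n^'n \<Rightarrow> (real^'n \<Rightarrow> real^'n) \<Rightarrow> nat" where
  "wlen A w = (LEAST n. \<exists>ws. length ws = n \<and> wmap A ws = w)"

definition is_longest :: "real^'n^'n \<Rightarrow> (real^'n \<Rightarrow> real^'n) \<Rightarrow> bool" where
  "is_longest A w \<longleftrightarrow> w \<in> weyl A \<and> (\<forall>u\<in>weyl A. wlen A u \<le> wlen A w)"

text \<open>c on reversed words: crev A (rev (ws @ [j])) = s_j (c_{ws}) - log((u alpha_j)(rho^vee)) alpha_j^vee
 with u = wmap ws, and (u alpha)(x) = alpha(u^{-1} x).\<close>
fun crev :: "real^'n^'n \<Rightarrow> 'n list \<Rightarrow> real^'n" where
  "crev A [] = 0"
| "crev A (j # rs) = sref A j (crev A rs) - ln ((inv (wmap A (rev rs)) rhov) $ j) *\<^sub>R coroot A j"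

definition cconst :: "real^'n^'n \<Rightarrow> (real^'n \<Rightarrow> real^'n) \<Rightarrow> real^'n" where
  "cconst A w = crev A (rev (SOME ws. wmap A ws = w \<and> length ws = wlen A w))"

definition low_path :: "real^'n^'n \<Rightarrow> real \<Rightarrow> (real^'n \<Rightarrow> real^'n) \<Rightarrow> (real \<Rightarrow> real^'n) \<Rightarrow> bool" where
  "low_path A T w p \<longleftrightarrow> continuous_on {0..<T} p \<and> p 0 = 0 \<and>
     (\<exists>C. ((\<lambda>t. p t - (C + ln (T - t) *\<^sub>R (rhov - inv w rhov) + cconst A w)) \<longlongrightarrow> 0) (at_left T))"

definition einf :: "real^'n^'n \<Rightarrow> real \<Rightarrow> 'n \<Rightarrow> (real \<Rightarrow> real^'n) \<Rightarrow> real \<Rightarrow> real^'n" where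
  "einf A T i p = (\<lambda>t. p t + ln (1 - integral {0..t} (\<lambda>s. exp (- (p s $ i)))
                                     / integral {0..T} (\<lambda>s. exp (- (p s $ i)))) *\<^sub>R coroot A i)"

text \<open>e^{-infty}_{s_{j1}...s_{jl}} = e_{j_l} o ... o e_{j_1}\<close>
definition einf_word :: "real^'n^'n \<Rightarrow> real \<Rightarrow> 'n list \<Rightarrow> (real \<Rightarrow> real^'n) \<Rightarrow> real \<Rightarrow> real^'n" where
  "einf_word A T ws p = foldl (\<lambda>q i. einf A T i q) p ws"

definition Tx :: "real^'n^'n \<Rightarrow> 'n \<Rightarrow> real \<Rightarrow> (real \<Rightarrow> real^'n) \<Rightarrow> real \<Rightarrow> real^'n" where
  "Tx A i c p = (\<lambda>t. p t + ln (1 + c * integral {0..t} (\<lambda>s. exp (- (p s $ i)))) *\<^sub>R coroot A i)"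

text \<open>T_z for z = x_{i1}(t1) ... x_{im}(tm), given as the list [(i1,t1),...,(im,tm)].\<close>
fun Tz :: "real^'n^'n \<Rightarrow> ('n \<times> real) list \<Rightarrow> (real \<Rightarrow> real^'n) \<Rightarrow> real \<Rightarrow> real^'n" where
  "Tz A [] p = p"
| "Tz A ((i, c) # zs) p = Tx A i c (Tz A zs p)"

definition sol_cond :: "real^'n^'n \<Rightarrow> real \<Rightarrow> 'n list \<Rightarrow> real list \<Rightarrow> (real \<Rightarrow> real^'n)
     \<Rightarrow> (real \<Rightarrow> real^'n) \<Rightarrow> bool" where
  "sol_cond A T ws ts \<eta> p \<longleftrightarrow>
     continuous_on {0..T} p \<and> p 0 = 0 \<and>
     (\<forall>t\<in>{0..<T}. einf_word A T ws p t = \<eta> t) \<and>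
     (\<forall>j<length ws. ts ! j = 1 / integral {0..T} (\<lambda>s. exp (- (einf_word A T (take j ws) p s $ (ws ! j)))))"

end

theory Submission
  imports Defs
begin

lemma wmap_append: "wmap A (xs @ ys) = wmap A xs \<circ> wmap A ys"
  by (induction xs) auto

lemma sref_comp: "sref A i x $ k = x$k - x$i * A$i$k"
  by (simp add: sref_def coroot_def)

lemma linear_sref: "linear (sref A i)"
  by (rule linearI) (auto simp: sref_def algebra_simps vec_eq_iff)

lemma linear_wmap: "linear (wmap A ws)"
proof (induction ws)
  case Nil show ?case using linear_id by (simp add: id_def)
next
  case (Cons j ws) show ?case using linear_compose[OF Cons linear_sref[of A j]] by (simp add: o_def)
qed

context
  fixes A :: "real^'n^'n"
  assumes cf: "cartan_finite A"
begin

lemma Aii: "A$i$i = 2" using cf unfolding cartan_finite_def by auto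

lemma coroot_ii: "coroot A i $ i = 2" using Aii by (simp add: coroot_def)

lemma sref_i: "sref A i x $ i = - (x $ i)"
  using Aii by (simp add: sref_def coroot_def algebra_simps)

lemma sref_sref: "sref A i (sref A i x) = x"
  by (simp add: sref_def sref_i coroot_ii algebra_simps)

lemma wmap_rev1: "wmap A (rev ws) (wmap A ws x) = x"
  by (induction ws arbitrary: x) (auto simp: wmap_append sref_sref)

lemma wmap_rev2: "wmap A ws (wmap A (rev ws) x) = x"
  using wmap_rev1[of "rev ws"] by simp

lemma det_sref: "det (matrix (sref A i)) = -1"
proof -
  let ?M = "transpose (matrix (sref A i))"
  have M: "?M $ j $ r = (if j = r then 1 else 0) - (if j = i then A$i$r else 0)" for j r
    by (simp add: transpose_def matrix_def sref_comp axis_def)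
  let ?x = "\<Sum>j\<in>UNIV - {i}. (A$i$j) *s row j ?M"
  have "?x \<in> vec.span {row j ?M |j. j \<noteq> i}"
    by (intro vec.span_sum vec.span_scale vec.span_base) auto
  from det_row_span[OF this]
  have e: "det (\<chi> k. if k = i then row i ?M + ?x else row k ?M) = det ?M" .
  have rowj: "row j ?M = axis j 1" if "j \<noteq> i" for j
    using that by (simp add: row_def M axis_def vec_eq_iff)
  have xe: "?x $ r = (if r = i then 0 else A$i$r)" for r
  proof -
    have "?x = (\<Sum>j\<in>UNIV - {i}. A$i$j *s (axis j 1 :: real^'n))"
      by (intro sum.cong) (use rowj in \<open>auto simp del: row_transpose\<close>)
    then have "?x $ r = (\<Sum>j\<in>UNIV - {i}. A$i$j * (axis j 1 :: real^'n) $ r)"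
      by (simp add: sum_component)
    also have "\<dots> = (\<Sum>j\<in>UNIV - {i}. if j = r then A$i$j else 0)"
      by (intro sum.cong) (auto simp: axis_def)
    also have "\<dots> = (if r = i then 0 else A$i$r)"
      by (simp add: sum.delta')
    finally show ?thesis .
  qed
  have ent: "(\<chi> k. if k = i then row i ?M + ?x else row k ?M) $ k $ r
      = (if k = r then (if k = i then -1 else 1) else 0)" for k r
  proof (cases "k = i")
    case True
    have "(row i ?M + ?x) $ r = (if k = r then (if k = i then -1 else 1) else 0)"
      using True unfolding vector_add_component xe by (simp add: row_def M Aii)
    then show ?thesis using True by simp
  next
    case False
    then show ?thesis by (simp add: rowj axis_def del: row_transpose)
  qed
  have "det (\<chi> k. if k = i then row i ?M + ?x else row k ?M)
      = prod (\<lambda>k. (\<chi> k. if k = i then row i ?M + ?x else row k ?M) $ k $ k) UNIV"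
    by (rule det_diagonal) (simp only: ent, simp)
  also have "\<dots> = prod (\<lambda>k. if k = i then -1 else 1) UNIV"
    by (simp only: ent, simp)
  also have "\<dots> = -1" by (simp add: prod.delta)
  finally show ?thesis using e by simp
qed

lemma det_wmap: "det (matrix (wmap A ws)) = (-1) ^ length ws"
proof (induction ws)
  case Nil then show ?case by (simp add: matrix_id_mat_1[unfolded id_def])
next
  case (Cons j ws)
  have "matrix (wmap A (j # ws)) = matrix (sref A j) ** matrix (wmap A ws)"
    by (simp add: matrix_compose linear_sref linear_wmap)
  then show ?case using Cons by (simp add: det_mul det_sref del: wmap.simps)
qed

lemma parity: "wmap A xs = wmap A ys \<Longrightarrow> even (length xs) = even (length ys)"
  using det_wmap[of xs] det_wmap[of ys]
  by (metis neg_one_even_power neg_one_odd_power one_neq_neg_one)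

lemma sum2: "s \<noteq> s' \<Longrightarrow> (\<And>i. i \<noteq> s \<Longrightarrow> i \<noteq> s' \<Longrightarrow> g i = 0) \<Longrightarrow> sum g (UNIV::'n set) = g s + g s'"
  by (subst sum.mono_neutral_right[of UNIV "{s,s'}"]) auto

lemma pq_cases:
  assumes "s \<noteq> s'"
  shows "(-A$s$s', -A$s'$s) \<in> {(0,0),(1,1),(1,2),(2,1),(1,3),(3,1)}"
proof -
  from cf obtain d :: "real^'n" where dpos: "\<forall>i. d$i > 0" and dsym: "\<forall>i j. d$i * A$i$j = d$j * A$j$i"
    and pd: "\<forall>x::real^'n. x \<noteq> 0 \<longrightarrow> (\<Sum>i\<in>UNIV. \<Sum>j\<in>UNIV. x$i * d$i * A$i$j * x$j) > 0"
    using cf unfolding cartan_finite_def by (elim conjE exE) auto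
  from cf have nonpos: "A$i$j \<le> 0" if "i \<noteq> j" for i j using that unfolding cartan_finite_def by simp
  from cf have ints: "A$i$j \<in> \<int>" for i j unfolding cartan_finite_def by simp
  define p where "p = - A$s$s'"
  define q where "q = - A$s'$s"
  have p0: "p \<ge> 0" "q \<ge> 0" using nonpos assms by (auto simp: p_def q_def)
  have sym: "d$s * p = d$s' * q" using dsym by (simp add: p_def q_def)
  define x :: "real^'n" where "x = (\<chi> k. if k = s then d$s * p else if k = s' then 2 * d$s else 0)"
  have xs: "x$s = d$s * p" "x$s' = 2 * d$s" "\<And>k. k \<noteq> s \<Longrightarrow> k \<noteq> s' \<Longrightarrow> x$k = 0"
    using assms by (auto simp: x_def)
  have "x \<noteq> 0" using xs(2) dpos by (metis mult_eq_0_iff zero_index zero_neq_numeral less_irrefl)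
  with pd have Q: "(\<Sum>i\<in>UNIV. \<Sum>j\<in>UNIV. x$i * d$i * A$i$j * x$j) > 0" by blast
  have inner: "(\<Sum>j\<in>UNIV. x$i * d$i * A$i$j * x$j) = x$i * d$i * A$i$s * x$s + x$i * d$i * A$i$s' * x$s'" for i
    by (rule sum2[OF assms]) (simp add: xs)
  have "(\<Sum>i\<in>UNIV. \<Sum>j\<in>UNIV. x$i * d$i * A$i$j * x$j)
     = (x$s * d$s * A$s$s * x$s + x$s * d$s * A$s$s' * x$s') + (x$s' * d$s' * A$s'$s * x$s + x$s' * d$s' * A$s'$s' * x$s')"
    unfolding inner by (rule sum2[OF assms]) (simp add: xs)
  also have "\<dots> = 2 * (d$s)^2 * d$s' * (4 - p * q)"
    unfolding xs Aii using sym by (simp add: p_def q_def power2_eq_square algebra_simps)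
  finally have "2 * (d$s)^2 * d$s' * (4 - p * q) > 0" using Q by simp
  then have pq4: "p * q < 4" using dpos by (smt (verit) mult_pos_pos zero_less_power zero_less_mult_pos)
  have pq0: "p = 0 \<longleftrightarrow> q = 0" using sym dpos by (metis mult_eq_0_iff less_irrefl)
  obtain P where P: "p = of_int P" using ints[of s s'] by (auto simp: p_def elim!: Ints_cases) (metis of_int_minus)
  obtain Qi where Qi: "q = of_int Qi" using ints[of s' s] by (auto simp: q_def elim!: Ints_cases) (metis of_int_minus)
  have "P \<ge> 0" "Qi \<ge> 0" "P * Qi < 4" "P = 0 \<longleftrightarrow> Qi = 0"
    using p0 pq4 pq0 P Qi by (auto simp flip: of_int_mult)
  then have "(P, Qi) \<in> {(0,0),(1,1),(1,2),(2,1),(1,3),(3,1)}"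
  proof -
    assume a: "P \<ge> 0" "Qi \<ge> 0" "P * Qi < 4" "P = 0 \<longleftrightarrow> Qi = 0"
    show ?thesis
    proof (cases "P = 0")
      case True then show ?thesis using a by auto
    next
      case False
      then have "P \<ge> 1" "Qi \<ge> 1" using a by auto
      then have "P \<le> 3" "Qi \<le> 3" using a(3) by (smt (verit) mult_le_cancel_left1 mult_le_cancel_right1)+
      then have "P \<in> {1,2,3}" "Qi \<in> {1,2,3}" using \<open>P \<ge> 1\<close> \<open>Qi \<ge> 1\<close> by auto
      then show ?thesis using a(3) by auto
    qed
  qed
  then show ?thesis using P Qi by (auto simp: p_def q_def)
qed

end

fun balt :: "nat \<Rightarrow> bool \<Rightarrow> bool list" where
  "balt 0 b = []"
| "balt (Suc k) b = balt k (\<not> b) @ [b]"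

fun altw :: "nat \<Rightarrow> 'a \<Rightarrow> 'a \<Rightarrow> 'a list" where
  "altw 0 x y = []"
| "altw (Suc k) x y = altw k y x @ [x]"

definition pa :: "real \<Rightarrow> real \<Rightarrow> bool \<Rightarrow> real \<times> real \<Rightarrow> real \<times> real" where
  "pa p q b z = (if b then (- fst z, snd z + p * fst z) else (fst z + q * snd z, - snd z))"

lemma altw_length[simp]: "length (altw k x y) = k"
  by (induction k arbitrary: x y) auto

lemma altw_set: "set (altw k x y) \<subseteq> {x, y}"
  by (induction k arbitrary: x y) auto

lemma altw_balt: "s \<noteq> s' \<Longrightarrow> {x, y} = {s, s'} \<Longrightarrow> map (\<lambda>j. j = s) (altw k x y) = balt k (x = s)"
proof (induction k arbitrary: x y)
  case 0 then show ?case by simp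
next
  case (Suc k)
  have "{y, x} = {s, s'}" using Suc.prems by auto
  from Suc.IH[OF Suc.prems(1) this] have "map (\<lambda>j. j = s) (altw k y x) = balt k (y = s)" .
  moreover have "(y = s) = (\<not> (x = s))" using Suc.prems by (auto simp: doubleton_eq_iff)
  ultimately show ?case by simp
qed

lemma altw_split: "altw (a + b) x y = altw a (if even b then x else y) (if even b then y else x) @ altw b x y"
  by (induction b arbitrary: x y) auto

lemma altw_Suc_hd: "altw (Suc b) x y = (if even b then x else y) # altw b x y"
  by (induction b arbitrary: x y) auto

lemma nodup_alt:
  assumes "s \<noteq> s'" "set l \<subseteq> {s, s'}" "l \<noteq> []"
    and "\<And>u j v. l = u @ j # j # v \<Longrightarrow> False"
  shows "l = altw (length l) (last l) (if last l = s then s' else s)"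
  using assms(2-4)
proof (induction l rule: rev_induct)
  case Nil then show ?case by simp
next
  case (snoc x l0)
  show ?case
  proof (cases "l0 = []")
    case True then show ?thesis using snoc.prems assms(1) by auto
  next
    case False
    have nd: "\<And>u j v. l0 = u @ j # j # v \<Longrightarrow> False"
    proof -
      fix u j v assume "l0 = u @ j # j # v"
      then have "l0 @ [x] = u @ j # j # (v @ [x])" by simp
      then show False by (rule snoc.prems(3))
    qed
    have IH: "l0 = altw (length l0) (last l0) (if last l0 = s then s' else s)"
      using snoc.IH[OF _ False nd] snoc.prems(1) by auto
    have ne: "last l0 \<noteq> x"
    proof
      assume "last l0 = x"
      then have "l0 = butlast l0 @ [x]" using append_butlast_last_id[OF False] by simp
      then have "l0 @ [x] = butlast l0 @ x # x # []" by (metis append_Cons append_Nil append_assoc)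
      then show False using snoc.prems(3) by blast
    qed
    have "last l0 \<in> set l0" using False by simp
    then have lx: "last l0 \<in> {s, s'}" "x \<in> {s, s'}" using snoc.prems(1) by auto
    then have o: "last l0 = (if x = s then s' else s)" using ne assms(1) by auto
    have ox: "(if last l0 = s then s' else s) = x" using o lx assms(1) by auto
    have "l0 = altw (length l0) (if x = s then s' else s) x"
      using IH unfolding ox o[symmetric] .
    then have "l0 @ [x] = altw (length l0) (if x = s then s' else s) x @ [x]" by simp
    then show ?thesis by simp
  qed
qed

lemma linear_pa: "linear (pa p q b)"
  by (rule linearI) (auto simp: pa_def algebra_simps)

lemma linear_foldr_pa: "linear (foldr (pa p q) bs)"
proof (induction bs)
  case Nil show ?case using linear_id by (simp add: id_def)
next
  case (Cons b bs) show ?case using linear_compose[OF Cons linear_pa[of p q b]] by (simp add: o_def)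
qed

lemma foldr_pa_fst: "fst (foldr (pa p q) bs (z1, z2)) = fst (foldr (pa p q) bs (1, 0)) * z1 + fst (foldr (pa p q) bs (0, 1)) * z2"
proof -
  have "(z1, z2) = z1 *\<^sub>R (1, 0) + z2 *\<^sub>R (0::real, 1::real)" by simp
  then have "foldr (pa p q) bs (z1, z2) = z1 *\<^sub>R foldr (pa p q) bs (1, 0) + z2 *\<^sub>R foldr (pa p q) bs (0, 1)"
    using linear_cmul[OF linear_foldr_pa[of p q bs]] linear_add[OF linear_foldr_pa[of p q bs]] by metis
  then show ?thesis by (simp add: mult.commute)
qed

context
  fixes A :: "real^'n^'n"
  assumes cf: "cartan_finite A"
begin

lemma L_coord:
  assumes ss: "s \<noteq> s'" and lI: "set l \<subseteq> {s, s'}"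
  shows "((wmap A l z)$s, (wmap A l z)$s') = foldr (pa (-A$s$s') (-A$s'$s)) (map (\<lambda>j. j = s) l) (z$s, z$s')"
  using lI
proof (induction l)
  case Nil then show ?case by simp
next
  case (Cons j l)
  then have IH: "((wmap A l z)$s, (wmap A l z)$s') = foldr (pa (-A$s$s') (-A$s'$s)) (map (\<lambda>j. j = s) l) (z$s, z$s')"
    and j: "j = s \<or> j = s'" by auto
  have fr: "foldr (pa (-A$s$s') (-A$s'$s)) (map (\<lambda>j. j = s) (j # l)) (z$s, z$s')
      = pa (-A$s$s') (-A$s'$s) (j = s) ((wmap A l z)$s, (wmap A l z)$s')"
    using IH by simp
  show ?case
  proof (cases "j = s")
    case True
    then show ?thesis unfolding fr by (simp add: pa_def sref_comp Aii[OF cf])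
  next
    case False
    then have "j = s'" using j by simp
    then show ?thesis unfolding fr using ss by (simp add: pa_def sref_comp Aii[OF cf])
  qed
qed

lemma L_span:
  assumes "set l \<subseteq> {s, s'}"
  shows "\<exists>f g. wmap A l z = z + f *\<^sub>R coroot A s + g *\<^sub>R coroot A s'"
  using assms
proof (induction l)
  case Nil show ?case by (intro exI[of _ "0::real"]) simp
next
  case (Cons j l)
  then obtain f g where fg: "wmap A l z = z + f *\<^sub>R coroot A s + g *\<^sub>R coroot A s'" and j: "j = s \<or> j = s'" by auto
  let ?w = "wmap A l z"
  have e: "wmap A (j # l) z = ?w - (?w $ j) *\<^sub>R coroot A j" by (simp add: sref_def)
  show ?case
  proof (cases "j = s")
    case True
    show ?thesis using e fg True
      by (intro exI[of _ "f - ?w $ j"] exI[of _ g]) (simp add: algebra_simps)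
  next
    case False
    then have "j = s'" using j by simp
    then show ?thesis using e fg
      by (intro exI[of _ f] exI[of _ "g - ?w $ j"]) (simp add: algebra_simps)
  qed
qed

lemma L_lift:
  assumes ss: "s \<noteq> s'" and pq4: "(-A$s$s') * (-A$s'$s) < 4"
    and l1: "set l1 \<subseteq> {s, s'}" and l2: "set l2 \<subseteq> {s, s'}"
    and eq: "\<And>z. foldr (pa (-A$s$s') (-A$s'$s)) (map (\<lambda>j. j = s) l1) z = foldr (pa (-A$s$s') (-A$s'$s)) (map (\<lambda>j. j = s) l2) z"
  shows "wmap A l1 = wmap A l2"
proof
  fix z
  obtain f1 g1 where 1: "wmap A l1 z = z + f1 *\<^sub>R coroot A s + g1 *\<^sub>R coroot A s'" using L_span[OF l1] by blast
  obtain f2 g2 where 2: "wmap A l2 z = z + f2 *\<^sub>R coroot A s + g2 *\<^sub>R coroot A s'" using L_span[OF l2] by blast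
  have c: "((wmap A l1 z)$s, (wmap A l1 z)$s') = ((wmap A l2 z)$s, (wmap A l2 z)$s')"
    using L_coord[OF ss l1] L_coord[OF ss l2] eq by simp
  define F where "F = f1 - f2"
  define G where "G = g1 - g2"
  define p where "p = - A$s$s'"
  define q where "q = - A$s'$s"
  have e1: "2 * F = q * G" using c unfolding 1 2 by (simp add: coroot_def Aii[OF cf] F_def G_def q_def algebra_simps)
  have e2: "2 * G = p * F" using c unfolding 1 2 by (simp add: coroot_def Aii[OF cf] F_def G_def p_def algebra_simps)
  have "4 * F = q * p * F" using e1 e2 by (metis mult.assoc mult.commute mult_2 numeral_Bit0)
  then have "F * (4 - p * q) = 0" by (simp add: algebra_simps)
  moreover have "4 - p * q \<noteq> 0" using pq4 by (simp add: p_def q_def)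
  ultimately have "F = 0" by simp
  then have "G = 0" using e2 by simp
  show "wmap A l1 z = wmap A l2 z" using 1 2 \<open>F = 0\<close> \<open>G = 0\<close> by (simp add: F_def G_def)
qed

lemma dihedral_core:
  assumes ss: "s \<noteq> s'" and lI: "set l \<subseteq> {s, s'}"
    and H1: "\<And>l'. set l' \<subseteq> {s, s'} \<Longrightarrow> wmap A l' = wmap A l \<Longrightarrow> length l \<le> length l'"
    and H2: "\<And>l'. set l' \<subseteq> {s, s'} \<Longrightarrow> wmap A l' = wmap A l \<circ> sref A s \<Longrightarrow> length l \<le> length l'"
    and m1: "m \<ge> 1"
    and pq4: "(-A$s$s') * (-A$s'$s) < 4"
    and braid: "\<And>z. foldr (pa (-A$s$s') (-A$s'$s)) (balt m False) z = foldr (pa (-A$s$s') (-A$s'$s)) (balt m True) z"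
    and coef: "\<And>k. k < m \<Longrightarrow>
        0 \<le> fst (foldr (pa (-A$s$s') (-A$s'$s)) (rev (balt k False)) (1,0)) \<and>
        0 \<le> fst (foldr (pa (-A$s$s') (-A$s'$s)) (rev (balt k False)) (0,1)) \<and>
        (0 < fst (foldr (pa (-A$s$s') (-A$s'$s)) (rev (balt k False)) (1,0)) \<or>
         0 < fst (foldr (pa (-A$s$s') (-A$s'$s)) (rev (balt k False)) (0,1)))"
  shows "\<exists>a b. a \<ge> 0 \<and> b \<ge> 0 \<and> (a > 0 \<or> b > 0) \<and> (\<forall>y. y$s = a * (wmap A l y)$s + b * (wmap A l y)$s')"
proof -
  let ?pa = "pa (-A$s$s') (-A$s'$s)"
  have cancel: "wmap A (u @ j # j # v) = wmap A (u @ v)" for u j v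
    by (auto simp: wmap_append sref_sref[OF cf] fun_eq_iff)
  have nd: "False" if "l = u @ j # j # v" for u j v
  proof -
    have "wmap A (u @ v) = wmap A l" using that cancel by simp
    moreover have "set (u @ v) \<subseteq> {s, s'}" using lI that by auto
    ultimately have "length l \<le> length (u @ v)" using H1 by blast
    then show False using that by simp
  qed
  show ?thesis
  proof (cases "l = []")
    case True
    then show ?thesis by (intro exI[of _ "1::real"] exI[of _ "0::real"]) (simp add: True)
  next
    case False
    have lastne: "last l \<noteq> s"
    proof
      assume ls: "last l = s"
      have lb: "l = butlast l @ [s]" using append_butlast_last_id[OF False] ls by metis
      have "wmap A (butlast l @ [s]) \<circ> sref A s = wmap A (butlast l)"
        by (auto simp: wmap_append sref_sref[OF cf] fun_eq_iff)
      then have w: "wmap A (butlast l) = wmap A l \<circ> sref A s" using lb by simp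
      have "set (butlast l) \<subseteq> {s, s'}" using lI by (meson in_set_butlastD subset_iff)
      from H2[OF this w] have "length l \<le> length (butlast l)" .
      moreover have "length l > 0" using False by simp
      ultimately show False by (simp only: length_butlast)
    qed
    have "last l \<in> set l" using False by simp
    then have ls': "last l = s'" using lI lastne by auto
    define k where "k = length l"
    have e: "(if s' = s then s' else s) = s" using ss by simp
    have lk: "l = altw k s' s"
    proof -
      have "l = altw (length l) (last l) (if last l = s then s' else s)"
        by (rule nodup_alt[OF ss lI False]) (rule nd)
      then show ?thesis unfolding ls' e k_def .
    qed
    have braidw: "wmap A (altw m s' s) = wmap A (altw m s s')"
    proof (rule L_lift[OF ss pq4])
      show "set (altw m s s') \<subseteq> {s, s'}" using altw_set by fastforce
      show "set (altw m s' s) \<subseteq> {s, s'}" using altw_set by fastforce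
      fix z
      have "map (\<lambda>j. j = s) (altw m s' s) = balt m False" using altw_balt[OF ss, of s' s] ss by auto
      moreover have "map (\<lambda>j. j = s) (altw m s s') = balt m True" using altw_balt[OF ss, of s s'] by auto
      ultimately show "foldr ?pa (map (\<lambda>j. j = s) (altw m s' s)) z = foldr ?pa (map (\<lambda>j. j = s) (altw m s s')) z"
        using braid by simp
    qed
    have km: "k < m"
    proof (rule ccontr)
      assume "\<not> k < m"
      then have km: "k = (k - m) + m" by simp
      define X where "X = (if even m then s' else s)"
      define Y where "Y = (if even m then s else s')"
      have XY: "X \<in> {s, s'}" "Y \<in> {s, s'}" by (auto simp: X_def Y_def)
      have "l = altw ((k - m) + m) s' s" using lk km by simp
      also have "\<dots> = altw (k - m) X Y @ altw m s' s" unfolding X_def Y_def by (rule altw_split)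
      finally have split: "l = altw (k - m) X Y @ altw m s' s" .
      have msuc: "m = Suc (m - 1)" using m1 by simp
      have "altw m s s' = altw (Suc (m - 1)) s s'" using msuc by simp
      also have "\<dots> = (if even (m - 1) then s else s') # altw (m - 1) s s'" by (rule altw_Suc_hd)
      also have "(if even (m - 1) then s else s') = X"
      proof -
        have "even (m - 1) \<longleftrightarrow> odd m" using m1 by (cases m) auto
        then show ?thesis unfolding X_def by simp
      qed
      finally have hd: "altw m s s' = X # altw (m - 1) s s'" .
      show False
      proof (cases "k = m")
        case True
        then have "wmap A l = wmap A (altw m s s')" using lk braidw by simp
        also have "altw m s s' = altw (m - 1) s' s @ [s]" by (subst msuc) simp
        finally have "wmap A l \<circ> sref A s = wmap A (altw (m - 1) s' s)"
          by (auto simp: wmap_append sref_sref[OF cf] fun_eq_iff)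
        moreover have "set (altw (m - 1) s' s) \<subseteq> {s, s'}" using altw_set[of "m - 1" s' s] by auto
        ultimately have "length l \<le> length (altw (m - 1) s' s)"
          using H2 by metis
        then show False using True m1 unfolding k_def by simp
      next
        case False
        then have "k - m > 0" using \<open>\<not> k < m\<close> by simp
        then obtain r where r: "k - m = Suc r" using not0_implies_Suc by blast
        have "wmap A l = wmap A (altw (k - m) X Y @ altw m s s')"
          by (subst split) (simp add: wmap_append braidw)
        also have "altw (k - m) X Y @ altw m s s' = altw r Y X @ X # X # altw (m - 1) s s'"
          unfolding r hd by simp
        finally have w1: "wmap A l = wmap A (altw r Y X @ altw (m - 1) s s')" using cancel by simp
        have s1: "set (altw r Y X @ altw (m - 1) s s') \<subseteq> {s, s'}"
          using altw_set[of r Y X] altw_set[of "m - 1" s s'] XY by auto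
        from H1[OF s1 w1[symmetric]] have "length l \<le> length (altw r Y X @ altw (m - 1) s s')" .
        then show False using r m1 unfolding k_def by simp
      qed
    qed
    define a where "a = fst (foldr ?pa (rev (balt k False)) (1,0))"
    define b where "b = fst (foldr ?pa (rev (balt k False)) (0,1))"
    have ab: "a \<ge> 0" "b \<ge> 0" "a > 0 \<or> b > 0" using coef[OF km] unfolding a_def b_def by auto
    have "y$s = a * (wmap A l y)$s + b * (wmap A l y)$s'" for y
    proof -
      define z where "z = wmap A l y"
      have y: "y = wmap A (rev l) z" using wmap_rev1[OF cf] unfolding z_def by simp
      have rI: "set (rev l) \<subseteq> {s, s'}" using lI by simp
      have mp: "map (\<lambda>j. j = s) (rev l) = rev (balt k False)"
      proof -
        have "map (\<lambda>j. j = s) (altw k s' s) = balt k False"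
          using altw_balt[OF ss, of s' s k] ss by (simp add: insert_commute)
        then show ?thesis unfolding lk by (simp add: rev_map[symmetric])
      qed
      have "((wmap A (rev l) z)$s, (wmap A (rev l) z)$s') = foldr ?pa (rev (balt k False)) (z$s, z$s')"
        using L_coord[OF ss rI, of z] unfolding mp .
      then have "(wmap A (rev l) z)$s = fst (foldr ?pa (rev (balt k False)) (z$s, z$s'))" by (metis fst_conv)
      then have "y$s = fst (foldr ?pa (rev (balt k False)) (z$s, z$s'))" using y by simp
      also have "\<dots> = a * z$s + b * z$s'" unfolding a_def b_def by (rule foldr_pa_fst)
      finally show ?thesis unfolding z_def .
    qed
    then show ?thesis using ab by blast
  qed
qed

end

definition coefok :: "real \<Rightarrow> real \<Rightarrow> nat \<Rightarrow> bool" where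
  "coefok p q m \<longleftrightarrow> m \<ge> 1 \<and> (\<forall>z. foldr (pa p q) (balt m False) z = foldr (pa p q) (balt m True) z) \<and>
     (\<forall>k<m. 0 \<le> fst (foldr (pa p q) (rev (balt k False)) (1,0)) \<and>
        0 \<le> fst (foldr (pa p q) (rev (balt k False)) (0,1)) \<and>
        (0 < fst (foldr (pa p q) (rev (balt k False)) (1,0)) \<or>
         0 < fst (foldr (pa p q) (rev (balt k False)) (0,1))))"

lemma coefok_cases:
  assumes "(p, q) \<in> {(0,0),(1,1),(1,2),(2,1),(1,3),(3,1)}"
  shows "\<exists>m. coefok p q m"
proof -
  have c00: "coefok 0 0 2" by (simp add: coefok_def pa_def numeral_eq_Suc less_Suc_eq prod_eq_iff)
  have c11: "coefok 1 1 3" by (simp add: coefok_def pa_def numeral_eq_Suc less_Suc_eq prod_eq_iff)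
  have c12: "coefok 1 2 4" by (simp add: coefok_def pa_def numeral_eq_Suc less_Suc_eq prod_eq_iff)
  have c21: "coefok 2 1 4" by (simp add: coefok_def pa_def numeral_eq_Suc less_Suc_eq prod_eq_iff)
  have c13: "coefok 1 3 6" by (simp add: coefok_def pa_def numeral_eq_Suc less_Suc_eq prod_eq_iff)
  have c31: "coefok 3 1 6" by (simp add: coefok_def pa_def numeral_eq_Suc less_Suc_eq prod_eq_iff)
  show ?thesis using assms c00 c11 c12 c21 c13 c31 by auto
qed

context
  fixes A :: "real^'n^'n"
  assumes cf: "cartan_finite A"
begin

lemma dihedral:
  assumes ss: "s \<noteq> s'" and lI: "set l \<subseteq> {s, s'}"
    and H1: "\<And>l'. set l' \<subseteq> {s, s'} \<Longrightarrow> wmap A l' = wmap A l \<Longrightarrow> length l \<le> length l'"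
    and H2: "\<And>l'. set l' \<subseteq> {s, s'} \<Longrightarrow> wmap A l' = wmap A l \<circ> sref A s \<Longrightarrow> length l \<le> length l'"
  shows "\<exists>a b. a \<ge> 0 \<and> b \<ge> 0 \<and> (a > 0 \<or> b > 0) \<and> (\<forall>y. y$s = a * (wmap A l y)$s + b * (wmap A l y)$s')"
proof -
  have pc: "(-A$s$s', -A$s'$s) \<in> {(0,0),(1,1),(1,2),(2,1),(1,3),(3,1)}" by (rule pq_cases[OF cf ss])
  then obtain m where m: "coefok (-A$s$s') (-A$s'$s) m" using coefok_cases by blast
  have pq4: "(-A$s$s') * (-A$s'$s) < 4" using pc by auto
  show ?thesis
    by (rule dihedral_core[OF cf ss lI H1 H2 _ pq4]) (use m in \<open>auto simp: coefok_def\<close>)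
qed

lemma wlen_le: "wlen A (wmap A ws) \<le> length ws"
  unfolding wlen_def by (rule Least_le) auto

lemma wlen_ex: "\<exists>ws'. length ws' = wlen A (wmap A ws) \<and> wmap A ws' = wmap A ws"
  unfolding wlen_def by (rule LeastI_ex) auto

lemma P_lemma:
  assumes "wlen A (wmap A ws) < wlen A (wmap A (ws @ [s]))" and "\<forall>k. (wmap A ws y)$k > 0"
  shows "y$s > 0"
  using assms
proof (induction "wlen A (wmap A ws)" arbitrary: ws s y rule: less_induct)
  case less
  define w where "w = wmap A ws"
  define n where "n = wlen A w"
  obtain rw where rw: "length rw = n" "wmap A rw = w" using wlen_ex[of ws] unfolding n_def w_def by blast
  have wy: "\<forall>k. (w y)$k > 0" using less.prems(2) unfolding w_def .
  have wsn: "n < wlen A (wmap A (ws @ [s]))" using less.prems(1) unfolding n_def w_def .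
  show "y$s > 0"
  proof (cases "n = 0")
    case True
    then have "rw = []" using rw by simp
    then have "w = id" using rw by simp
    then show ?thesis using wy by simp
  next
    case False
    then have rwne: "rw \<noteq> []" using rw by auto
    define s' where "s' = last rw"
    define bw where "bw = butlast rw"
    have rwe: "rw = bw @ [s']" using rwne unfolding s'_def bw_def by simp
    have lbw: "length bw = n - 1" using rw rwe by simp
    have wbw: "wmap A bw \<circ> sref A s' = w" using rw rwe by (simp add: wmap_append)
    have ss: "s \<noteq> s'"
    proof
      assume "s = s'"
      have "wmap A (ws @ [s]) = w \<circ> sref A s" by (simp add: wmap_append w_def)
      also have "\<dots> = wmap A bw \<circ> sref A s' \<circ> sref A s" using wbw by simp
      also have "\<dots> = wmap A bw" using \<open>s = s'\<close> by (simp add: fun_eq_iff sref_sref[OF cf])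
      finally have "wmap A (ws @ [s]) = wmap A bw" .
      then have "wlen A (wmap A (ws @ [s])) \<le> n - 1" using wlen_le[of bw] lbw by simp
      then show False using wsn by simp
    qed
    define valid where "valid vs l \<longleftrightarrow> set l \<subseteq> {s, s'} \<and> wmap A (vs @ l) = w \<and> length vs + length l \<le> n" for vs l
    have vbw: "valid bw [s']" unfolding valid_def using wbw lbw False by (simp add: wmap_append)
    define N where "N = (LEAST k. \<exists>vs l. valid vs l \<and> length vs = k)"
    obtain vs l where vl: "valid vs l" "length vs = N"
      using LeastI_ex[of "\<lambda>k. \<exists>vs l. valid vs l \<and> length vs = k"] vbw unfolding N_def by blast
    have minN: "N \<le> length vs'" if "valid vs' l'" for vs' l'
      unfolding N_def by (rule Least_le) (use that in blast)
    have Nn: "N < n" using minN[OF vbw] lbw False by simp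
    have lenfact: "n \<le> length vs' + length l'" if "wmap A (vs' @ l') = w" for vs' l'
      using wlen_le[of "vs' @ l'"] that unfolding n_def by simp
    have lI: "set l \<subseteq> {s, s'}" and wvl: "wmap A (vs @ l) = w" and vln: "length vs + length l \<le> n"
      using vl(1) unfolding valid_def by auto
    have red: "wlen A (wmap A vs) = length vs"
    proof (rule ccontr)
      assume "wlen A (wmap A vs) \<noteq> length vs"
      then have lt: "wlen A (wmap A vs) < length vs" using wlen_le[of vs] by simp
      obtain x where x: "length x = wlen A (wmap A vs)" "wmap A x = wmap A vs" using wlen_ex[of vs] by blast
      have "valid x l" unfolding valid_def using lI wvl vln x lt by (simp add: wmap_append)
      then have "N \<le> length x" by (rule minN)
      then show False using x lt vl(2) by simp
    qed
    have asc: "wlen A (wmap A vs) < wlen A (wmap A (vs @ [t]))" if tI: "t \<in> {s, s'}" for t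
    proof (rule ccontr)
      assume "\<not> ?thesis"
      then have le: "wlen A (wmap A (vs @ [t])) \<le> length vs" using red by simp
      obtain x where x: "length x = wlen A (wmap A (vs @ [t]))" "wmap A x = wmap A (vs @ [t])" using wlen_ex[of "vs @ [t]"] by blast
      have "even (length x) = even (length (vs @ [t]))" by (rule parity[OF cf x(2)])
      then have "length x \<noteq> length vs" by auto
      then have lt: "length x < length vs" using le x by simp
      have "wmap A (x @ t # l) = wmap A (vs @ l)"
        using x(2) by (auto simp: wmap_append fun_eq_iff sref_sref[OF cf])
      then have "valid x (t # l)" unfolding valid_def using lI tI wvl vln lt by auto
      then have "N \<le> length x" by (rule minN)
      then show False using lt vl(2) by simp
    qed
    have IH: "z$t > 0" if "t \<in> {s, s'}" "\<forall>k. (wmap A vs z)$k > 0" for t z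
    proof -
      have "wlen A (wmap A vs) < wlen A (wmap A ws)" using red vl(2) Nn unfolding n_def w_def by simp
      from less.hyps[OF this asc[OF that(1)] that(2)] show ?thesis .
    qed
    have H1: "length l \<le> length l'" if "set l' \<subseteq> {s, s'}" "wmap A l' = wmap A l" for l'
    proof -
      have "wmap A (vs @ l') = w" using wvl that(2) by (simp add: wmap_append)
      then have "n \<le> length vs + length l'" by (rule lenfact)
      then show ?thesis using vln by simp
    qed
    have H2: "length l \<le> length l'" if "set l' \<subseteq> {s, s'}" "wmap A l' = wmap A l \<circ> sref A s" for l'
    proof -
      have "wmap A (vs @ l') = wmap A (ws @ [s])" using wvl that(2) unfolding w_def by (simp add: wmap_append o_assoc)
      then have "wlen A (wmap A (ws @ [s])) \<le> length vs + length l'" using wlen_le[of "vs @ l'"] by simp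
      then show ?thesis using vln wsn by simp
    qed
    obtain a b where ab: "a \<ge> 0" "b \<ge> 0" "a > 0 \<or> b > 0" "\<forall>y. y$s = a * (wmap A l y)$s + b * (wmap A l y)$s'"
      using dihedral[OF ss lI H1 H2] by blast
    define z where "z = wmap A l y"
    have "wmap A vs z = w y" unfolding z_def using wvl by (simp add: wmap_append fun_eq_iff)
    then have zp: "\<forall>k. (wmap A vs z)$k > 0" using wy by simp
    have "z$s > 0" "z$s' > 0" using IH[OF _ zp] by auto
    moreover have "y$s = a * z$s + b * z$s'" using ab(4) unfolding z_def by blast
    ultimately show ?thesis using ab(1-3)
      by (smt (verit) mult_nonneg_nonneg mult_pos_pos)
  qed
qed

lemma reduced_take:
  assumes "length ws = wlen A (wmap A ws)" "k \<le> length ws"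
  shows "wlen A (wmap A (take k ws)) = k"
proof (rule ccontr)
  assume "wlen A (wmap A (take k ws)) \<noteq> k"
  then have lt: "wlen A (wmap A (take k ws)) < k" using wlen_le[of "take k ws"] assms(2) by simp
  obtain x where x: "length x = wlen A (wmap A (take k ws))" "wmap A x = wmap A (take k ws)" using wlen_ex by blast
  have "wmap A (x @ drop k ws) = wmap A ws"
    using x(2) wmap_append[of A "take k ws" "drop k ws"] by (simp add: wmap_append)
  then have "wlen A (wmap A ws) \<le> length x + (length ws - k)" using wlen_le[of "x @ drop k ws"] by simp
  then show False using lt x(1) assms by simp
qed

lemma h_pos:
  assumes "length ws = wlen A (wmap A ws)" "k < length ws"
  shows "(wmap A (rev (take k ws)) rhov) $ (ws ! k) > 0"
proof (rule P_lemma)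
  have "take k ws @ [ws ! k] = take (Suc k) ws" using assms(2) by (simp add: take_Suc_conv_app_nth)
  then show "wlen A (wmap A (take k ws)) < wlen A (wmap A (take k ws @ [ws ! k]))"
    using reduced_take[OF assms(1)] assms(2) by simp
  show "\<forall>j. 0 < wmap A (take k ws) (wmap A (rev (take k ws)) rhov) $ j"
    by (simp add: wmap_rev2[OF cf] rhov_def)
qed

end


lemma cont_on_lt:
  fixes f :: "real \<Rightarrow> 'a::topological_space" and T :: real
  assumes "\<And>b. 0 \<le> b \<Longrightarrow> b < T \<Longrightarrow> continuous_on {0..b} f"
  shows "continuous_on {0..<T} f"
  unfolding continuous_on_eq_continuous_within
proof
  fix x :: real assume x: "x \<in> {0..<T}"
  define b where "b = (x + T) / 2"
  have "continuous_on {0..b} f" using assms[of b] x by (auto simp: b_def)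
  then have "continuous (at x within {0..b}) f" using x by (auto simp: continuous_on_eq_continuous_within b_def)
  moreover have "at x within {0..<T} = at x within {0..b}"
    by (rule at_within_nhd[of x "{x - 1 <..< b}"]) (use x in \<open>auto simp: b_def\<close>)
  ultimately show "continuous (at x within {0..<T}) f" by simp
qed

lemma int_basic:
  fixes g :: "real \<Rightarrow> real"
  assumes cg: "continuous_on {0..<T} g"
  shows int_basic_int: "\<And>t. t \<in> {0..<T} \<Longrightarrow> g integrable_on {0..t}"
    and int_basic_cont: "continuous_on {0..<T} (\<lambda>t. integral {0..t} g)"
    and int_basic_deriv: "\<And>t. t \<in> {0<..<T} \<Longrightarrow> ((\<lambda>t. integral {0..t} g) has_real_derivative g t) (at t)"
proof -
  have cb: "continuous_on {0..b} g" if "b < T" for b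
    by (rule continuous_on_subset[OF cg]) (use that in auto)
  show "g integrable_on {0..t}" if "t \<in> {0..<T}" for t
    using cb[of t] that by (auto intro: integrable_continuous_real)
  show "continuous_on {0..<T} (\<lambda>t. integral {0..t} g)"
    by (rule cont_on_lt, rule indefinite_integral_continuous_1, rule integrable_continuous_real, rule cb) auto
  show "((\<lambda>t. integral {0..t} g) has_real_derivative g t) (at t)" if t: "t \<in> {0<..<T}" for t
  proof -
    define b where "b = (t + T) / 2"
    have "((\<lambda>x. integral {0..x} g) has_real_derivative g t) (at t within {0..b})"
      by (rule integral_has_real_derivative[OF cb]) (use t in \<open>auto simp: b_def\<close>)
    moreover have "at t within {0..b} = at t"
      by (rule at_within_interior) (use t in \<open>auto simp: b_def\<close>)
    ultimately show ?thesis by simp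
  qed
qed

lemma ftc0:
  fixes g F :: "real \<Rightarrow> real"
  assumes "0 \<le> t" "continuous_on {0..t} F" "\<And>x. x \<in> {0<..<t} \<Longrightarrow> (F has_real_derivative g x) (at x)"
  shows "(g has_integral (F t - F 0)) {0..t}"
  using fundamental_theorem_of_calculus_interior[OF assms(1,2)] assms(3)
  by (auto simp: has_real_derivative_iff_has_vector_derivative)

lemma asym_I:
  fixes g :: "real \<Rightarrow> real" and T b K :: real
  assumes T: "T > 0" and cg: "continuous_on {0..<T} g" and b: "b > 1"
    and lim: "((\<lambda>t. g t * (T - t) powr b) \<longlongrightarrow> K) (at_left T)"
  shows "((\<lambda>t. integral {0..t} g * (T - t) powr (b - 1)) \<longlongrightarrow> K / (b - 1)) (at_left T)"
proof -
  have ev: "eventually (\<lambda>t. t \<in> {0<..<T}) (at_left T)" using eventually_at_left_real[OF T] .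
  have t0: "((\<lambda>t. T - t) \<longlongrightarrow> 0) (at_left T)"
    by (rule tendsto_eq_intros refl)+ (auto intro: tendsto_ident_at)
  have p0: "((\<lambda>t. (T - t) powr (b - 1)) \<longlongrightarrow> 0) (at_left T)"
    by (rule tendsto_zero_powrI[OF t0 tendsto_const]) (use ev b in \<open>auto elim: eventually_mono\<close>)
  have Ginf: "LIM t at_left T. inverse ((T - t) powr (b - 1)) :> at_top"
    by (rule filterlim_inverse_at_top[OF p0]) (use ev in \<open>auto elim: eventually_mono\<close>)
  have Geq: "inverse ((T - t) powr (b - 1)) = (T - t) powr (1 - b)" if "t < T" for t
    using that by (simp add: powr_minus[symmetric])
  have Ginf': "LIM t at_left T. (T - t) powr (1 - b) :> at_top"
    using Ginf by (rule filterlim_cong[THEN iffD1, rotated 3]) (use ev Geq in \<open>auto elim: eventually_mono\<close>)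
  have dG: "((\<lambda>t. (T - t) powr (1 - b)) has_real_derivative (b - 1) * (T - t) powr (- b)) (at t)" if "t < T" for t
  proof -
    have "((\<lambda>t. (T - t) powr (1 - b)) has_real_derivative (1 - b) * (T - t) powr (1 - b - of_nat 1) * (-1)) (at t)"
      by (rule DERIV_fun_powr) (use that in \<open>auto intro!: derivative_eq_intros\<close>)
    then show ?thesis by (simp add: algebra_simps)
  qed
  have "((\<lambda>t. integral {0..t} g / (T - t) powr (1 - b)) \<longlongrightarrow> K / (b - 1)) (at_left T)"
  proof (rule lhopital_left_at_top[OF Ginf'])
    show "\<forall>\<^sub>F t in at_left T. (b - 1) * (T - t) powr (- b) \<noteq> 0"
      using ev b by (auto elim: eventually_mono)
    show "\<forall>\<^sub>F t in at_left T. ((\<lambda>t. integral {0..t} g) has_real_derivative g t) (at t)"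
      using ev by (auto elim!: eventually_mono intro: int_basic_deriv[OF cg])
    show "\<forall>\<^sub>F t in at_left T. ((\<lambda>t. (T - t) powr (1 - b)) has_real_derivative (b - 1) * (T - t) powr (- b)) (at t)"
      using ev by (auto elim!: eventually_mono intro: dG)
    have "((\<lambda>t. g t * (T - t) powr b / (b - 1)) \<longlongrightarrow> K / (b - 1)) (at_left T)"
      by (intro tendsto_divide lim tendsto_const) (use b in auto)
    then show "((\<lambda>t. g t / ((b - 1) * (T - t) powr (- b))) \<longlongrightarrow> K / (b - 1)) (at_left T)"
      by (rule filterlim_cong[THEN iffD1, rotated 3]) (use ev in \<open>auto elim!: eventually_mono simp: powr_minus divide_simps\<close>)
  qed
  then show ?thesis
    by (rule filterlim_cong[THEN iffD1, rotated 3]) (use ev in \<open>auto elim!: eventually_mono simp: powr_minus powr_diff divide_simps\<close>)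
qed

lemma cont_extend:
  fixes f :: "real \<Rightarrow> 'a::topological_space" and T :: real
  assumes T: "T > 0" and cf: "continuous_on {0..<T} f" and lim: "(f \<longlongrightarrow> L) (at_left T)"
  shows "continuous_on {0..T} (\<lambda>t. if t < T then f t else L)"
  unfolding continuous_on_eq_continuous_within
proof
  fix x assume x: "x \<in> {0..T}"
  show "continuous (at x within {0..T}) (\<lambda>t. if t < T then f t else L)"
  proof (cases "x < T")
    case True
    have c: "continuous (at x within {0..<T}) f" using cf x True by (auto simp: continuous_on_eq_continuous_within)
    have e: "at x within {0..T} = at x within {0..<T}"
      by (rule at_within_nhd[of x "{x - 1 <..< T}"]) (use x True in auto)
    have ev: "\<forall>\<^sub>F t in at x within {0..<T}. f t = (if t < T then f t else L)"
      by (auto simp: eventually_at_filter)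
    have "((\<lambda>t. if t < T then f t else L) \<longlongrightarrow> f x) (at x within {0..<T})"
      using c unfolding continuous_within by (rule filterlim_cong[THEN iffD1, rotated 3]) (use ev in auto)
    then show ?thesis unfolding continuous_within e using True by simp
  next
    case False
    then have xT: "x = T" using x by simp
    have ev: "\<forall>\<^sub>F t in at_left T. f t = (if t < T then f t else L)"
      using eventually_at_left_real[OF T] by (auto elim: eventually_mono)
    have "((\<lambda>t. if t < T then f t else L) \<longlongrightarrow> L) (at_left T)"
      using lim by (rule filterlim_cong[THEN iffD1, rotated 3]) (use ev in auto)
    then show ?thesis unfolding continuous_within xT at_within_Icc_at_left[OF T] by simp
  qed
qed

lemma Ginf_lemma:
  fixes T b :: real
  assumes T: "T > 0" and b: "b > 1"
  shows "LIM t at_left T. (T - t) powr (1 - b) :> at_top"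
    and "((\<lambda>t. (T - t) powr (b - 1)) \<longlongrightarrow> 0) (at_left T)"
proof -
  have ev: "eventually (\<lambda>t. t \<in> {0<..<T}) (at_left T)" using eventually_at_left_real[OF T] .
  have t0: "((\<lambda>t. T - t) \<longlongrightarrow> 0) (at_left T)"
    by (rule tendsto_eq_intros refl)+ (auto intro: tendsto_ident_at)
  show p0: "((\<lambda>t. (T - t) powr (b - 1)) \<longlongrightarrow> 0) (at_left T)"
    by (rule tendsto_zero_powrI[OF t0 tendsto_const]) (use ev b in \<open>auto elim: eventually_mono\<close>)
  have Ginf: "LIM t at_left T. inverse ((T - t) powr (b - 1)) :> at_top"
    by (rule filterlim_inverse_at_top[OF p0]) (use ev in \<open>auto elim: eventually_mono\<close>)
  have Geq: "inverse ((T - t) powr (b - 1)) = (T - t) powr (1 - b)" if "t < T" for t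
    using that by (simp add: powr_minus[symmetric])
  show "LIM t at_left T. (T - t) powr (1 - b) :> at_top"
    using Ginf by (rule filterlim_cong[THEN iffD1, rotated 3]) (use ev Geq in \<open>auto elim: eventually_mono\<close>)
qed

lemma FWD:
  fixes A :: "real^'n^'n" and q :: "real \<Rightarrow> real^'n" and C r :: "real^'n"
  assumes cf: "cartan_finite A" and T: "T > 0" and c: "c > 0" and cq: "continuous_on {0..<T} q"
    and asy: "((\<lambda>t. q t - (C + ln (T - t) *\<^sub>R r)) \<longlongrightarrow> 0) (at_left T)" and b: "r$i > 1"
  shows FWD_cont: "continuous_on {0..<T} (Tx A i c q)"
    and FWD_0: "Tx A i c q 0 = q 0"
    and FWD_asy: "\<exists>C'. ((\<lambda>t. Tx A i c q t - (C' + ln (T - t) *\<^sub>R (r - (r$i - 1) *\<^sub>R coroot A i))) \<longlongrightarrow> 0) (at_left T)"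
    and FWD_einf: "\<forall>t\<in>{0..<T}. einf A T i (Tx A i c q) t = q t"
    and FWD_int: "integral {0..T} (\<lambda>s. exp (- (Tx A i c q s $ i))) = 1 / c"
proof -
  define g where "g = (\<lambda>s. exp (- (q s $ i)))"
  define I where "I = (\<lambda>t. integral {0..t} g)"
  define bb where "bb = r$i"
  define a where "a = coroot A i"
  have Txe: "Tx A i c q t = q t + ln (1 + c * I t) *\<^sub>R a" for t
    by (simp add: Tx_def I_def g_def a_def)
  have cg: "continuous_on {0..<T} g" unfolding g_def by (intro continuous_intros cq)
  have gpos: "g s > 0" for s by (simp add: g_def)
  have Inn: "I t \<ge> 0" if "t \<in> {0..<T}" for t
    unfolding I_def by (rule integral_nonneg[OF int_basic_int[OF cg that]]) (simp add: less_imp_le[OF gpos])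
  have Ipos: "1 + c * I t > 0" if "t \<in> {0..<T}" for t using Inn[OF that] c by (simp add: add_pos_nonneg)
  have I0: "I 0 = 0" by (simp add: I_def)
  have Icont: "continuous_on {0..<T} I" unfolding I_def by (rule int_basic_cont[OF cg])
  have Ider: "(I has_real_derivative g t) (at t)" if "t \<in> {0<..<T}" for t
    unfolding I_def by (rule int_basic_deriv[OF cg that])
  have ev: "eventually (\<lambda>t. t \<in> {0<..<T}) (at_left T)" using eventually_at_left_real[OF T] .
  have qi: "((\<lambda>t. q t $ i - (C$i + ln (T - t) * bb)) \<longlongrightarrow> 0) (at_left T)"
    using tendsto_vec_nth[OF asy, of i] by (simp add: bb_def)
  have limg: "((\<lambda>t. g t * (T - t) powr bb) \<longlongrightarrow> exp (- (C$i))) (at_left T)"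
  proof -
    have "((\<lambda>t. exp (- (q t $ i - (C$i + ln (T - t) * bb)) - C$i)) \<longlongrightarrow> exp (- 0 - C$i)) (at_left T)"
      by (intro tendsto_intros qi)
    then show ?thesis
      by (rule filterlim_cong[THEN iffD1, rotated 3])
        (use ev in \<open>auto elim!: eventually_mono simp: g_def powr_def exp_add[symmetric] exp_diff algebra_simps\<close>)
  qed
  define L where "L = exp (- (C$i)) / (bb - 1)"
  have bb1: "bb > 1" using b by (simp add: bb_def)
  have Lpos: "L > 0" using bb1 by (simp add: L_def)
  have IL: "((\<lambda>t. I t * (T - t) powr (bb - 1)) \<longlongrightarrow> L) (at_left T)"
    unfolding I_def L_def by (rule asym_I[OF T cg bb1 limg])
  have Iinf: "filterlim I at_top (at_left T)"
  proof -
    have "LIM t at_left T. I t * (T - t) powr (bb - 1) * (T - t) powr (1 - bb) :> at_top"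
      by (rule filterlim_tendsto_pos_mult_at_top[OF IL Lpos Ginf_lemma(1)[OF T bb1]])
    then show ?thesis
      by (rule filterlim_cong[THEN iffD1, rotated 3])
        (use ev in \<open>auto elim!: eventually_mono simp: powr_add[symmetric]\<close>)
  qed
  have lnlim: "((\<lambda>t. ln (1 + c * I t) + (bb - 1) * ln (T - t)) \<longlongrightarrow> ln (c * L)) (at_left T)"
  proof -
    have "((\<lambda>t. (T - t) powr (bb - 1) + c * (I t * (T - t) powr (bb - 1))) \<longlongrightarrow> 0 + c * L) (at_left T)"
      by (intro tendsto_intros Ginf_lemma(2)[OF T bb1] IL)
    then have "((\<lambda>t. (T - t) powr (bb - 1) + c * (I t * (T - t) powr (bb - 1))) \<longlongrightarrow> c * L) (at_left T)" by simp
    then have lnl: "((\<lambda>t. ln ((T - t) powr (bb - 1) + c * (I t * (T - t) powr (bb - 1)))) \<longlongrightarrow> ln (c * L)) (at_left T)"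
      by (rule tendsto_ln) (use c Lpos in simp)
    have eqln: "ln ((T - t) powr (bb - 1) + c * (I t * (T - t) powr (bb - 1))) = ln (1 + c * I t) + (bb - 1) * ln (T - t)"
      if "t \<in> {0<..<T}" for t
    proof -
      have "(T - t) powr (bb - 1) + c * (I t * (T - t) powr (bb - 1)) = (1 + c * I t) * (T - t) powr (bb - 1)"
        by (simp add: algebra_simps)
      moreover have "ln ((1 + c * I t) * (T - t) powr (bb - 1)) = ln (1 + c * I t) + ln ((T - t) powr (bb - 1))"
        using Ipos[of t] that by (intro ln_mult_pos) auto
      moreover have "ln ((T - t) powr (bb - 1)) = (bb - 1) * ln (T - t)" using that by (simp add: ln_powr)
      ultimately show ?thesis by simp
    qed
    show ?thesis using lnl
      by (rule filterlim_cong[THEN iffD1, rotated 3]) (use ev eqln in \<open>auto elim!: eventually_mono\<close>)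
  qed
  show "\<exists>C'. ((\<lambda>t. Tx A i c q t - (C' + ln (T - t) *\<^sub>R (r - (r$i - 1) *\<^sub>R coroot A i))) \<longlongrightarrow> 0) (at_left T)"
  proof (intro exI)
    have "((\<lambda>t. (q t - (C + ln (T - t) *\<^sub>R r)) + (ln (1 + c * I t) + (bb - 1) * ln (T - t) - ln (c * L)) *\<^sub>R a) \<longlongrightarrow> 0 + (ln (c * L) - ln (c * L)) *\<^sub>R a) (at_left T)"
      by (intro tendsto_intros asy lnlim)
    then show "((\<lambda>t. Tx A i c q t - ((C + ln (c * L) *\<^sub>R a) + ln (T - t) *\<^sub>R (r - (r$i - 1) *\<^sub>R coroot A i))) \<longlongrightarrow> 0) (at_left T)"
      by (simp add: Txe bb_def a_def algebra_simps)
  qed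
  show "continuous_on {0..<T} (Tx A i c q)"
    unfolding Txe[abs_def] by (intro continuous_intros cq Icont) (use Ipos in \<open>auto simp: less_imp_neq[symmetric]\<close>)
  show "Tx A i c q 0 = q 0" by (simp add: Txe I0)
  define F where "F = (\<lambda>t. I t / (1 + c * I t))"
  have Txi: "Tx A i c q s $ i = q s $ i + 2 * ln (1 + c * I s)" for s
    by (simp add: Txe a_def coroot_ii[OF cf])
  have expTx: "exp (- (Tx A i c q s $ i)) = g s / (1 + c * I s)^2" if "s \<in> {0..<T}" for s
  proof -
    have "exp (- (Tx A i c q s $ i)) = exp (- (q s $ i)) / exp (ln (1 + c * I s)) ^ 2"
      unfolding Txi by (simp add: exp_diff exp_add[symmetric] power2_eq_square)
    then show ?thesis using Ipos[OF that] by (simp add: g_def)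
  qed
  have Fder: "(F has_real_derivative exp (- (Tx A i c q s $ i))) (at s)" if "s \<in> {0<..<T}" for s
  proof -
    have s': "s \<in> {0..<T}" using that by auto
    have "(F has_real_derivative (g s * (1 + c * I s) - I s * (c * g s)) / (1 + c * I s)^2) (at s)"
      unfolding F_def using Ipos[OF s']
      by (auto intro!: derivative_eq_intros Ider[OF that] simp: power2_eq_square)
    moreover have "(g s * (1 + c * I s) - I s * (c * g s)) / (1 + c * I s)^2 = exp (- (Tx A i c q s $ i))"
      unfolding expTx[OF s'] by (simp add: algebra_simps)
    ultimately show ?thesis by simp
  qed
  have Fcont: "continuous_on {0..<T} F"
    unfolding F_def by (intro continuous_intros Icont) (use Ipos in \<open>auto simp: less_imp_neq[symmetric]\<close>)
  have F0: "F 0 = 0" by (simp add: F_def I0)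
  have Gt: "integral {0..t} (\<lambda>s. exp (- (Tx A i c q s $ i))) = F t" if "t \<in> {0..<T}" for t
  proof -
    have "((\<lambda>s. exp (- (Tx A i c q s $ i))) has_integral (F t - F 0)) {0..t}"
      by (rule ftc0) (use that in \<open>auto intro: continuous_on_subset[OF Fcont] Fder\<close>)
    then show ?thesis using F0 by (simp add: integral_unique)
  qed
  have Flim: "(F \<longlongrightarrow> 1 / c) (at_left T)"
  proof -
    have "((\<lambda>t. 1 / c - inverse (c * (1 + c * I t))) \<longlongrightarrow> 1 / c - 0) (at_left T)"
    proof (intro tendsto_intros tendsto_inverse_0_at_top)
      have "LIM t at_left T. c * (1 + c * I t) :> at_top"
        by (intro filterlim_tendsto_pos_mult_at_top[OF tendsto_const c] filterlim_tendsto_add_at_top[OF tendsto_const]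
            filterlim_tendsto_pos_mult_at_top[OF tendsto_const c Iinf])
      then show "LIM t at_left T. c * (1 + c * I t) :> at_top" .
    qed
    then have lim2: "((\<lambda>t. 1 / c - inverse (c * (1 + c * I t))) \<longlongrightarrow> 1 / c) (at_left T)" by simp
    have Feq: "1 / c - inverse (c * (1 + c * I t)) = F t" if "t \<in> {0<..<T}" for t
    proof -
      have "1 + c * I t > 0" using Ipos that by auto
      moreover have "c + c * (c * I t) > 0" using c \<open>1 + c * I t > 0\<close>
        by (metis mult_pos_pos distrib_left mult_1_right)
      ultimately show ?thesis using c by (simp add: F_def field_simps)
    qed
    show ?thesis using lim2
      by (rule filterlim_cong[THEN iffD1, rotated 3]) (use ev Feq in \<open>auto elim!: eventually_mono\<close>)
  qed
  have GT: "integral {0..T} (\<lambda>s. exp (- (Tx A i c q s $ i))) = 1 / c"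
  proof -
    define Ft where "Ft = (\<lambda>t. if t < T then F t else 1 / c)"
    have "continuous_on {0..T} Ft" unfolding Ft_def by (rule cont_extend[OF T Fcont Flim])
    moreover have "(Ft has_real_derivative exp (- (Tx A i c q x $ i))) (at x)" if "x \<in> {0<..<T}" for x
      by (rule has_field_derivative_transform_within_open[OF Fder[OF that], of "{..<T}"])
        (use that in \<open>auto simp: Ft_def\<close>)
    ultimately have "((\<lambda>s. exp (- (Tx A i c q s $ i))) has_integral (Ft T - Ft 0)) {0..T}"
      using T by (intro ftc0) auto
    then show ?thesis using F0 T by (simp add: integral_unique Ft_def)
  qed
  show "integral {0..T} (\<lambda>s. exp (- (Tx A i c q s $ i))) = 1 / c" by (rule GT)
  show "\<forall>t\<in>{0..<T}. einf A T i (Tx A i c q) t = q t"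
  proof
    fix t assume t: "t \<in> {0..<T}"
    have "1 - F t / (1 / c) = 1 / (1 + c * I t)"
      using Ipos[OF t] c by (simp add: F_def field_simps)
    then have "ln (1 - F t / (1 / c)) = - ln (1 + c * I t)"
      using Ipos[OF t] by (simp add: ln_div)
    then show "einf A T i (Tx A i c q) t = q t"
      unfolding einf_def Gt[OF t] GT by (simp add: Txe a_def)
  qed
qed

lemma BWD:
  fixes A :: "real^'n^'n" and p :: "real \<Rightarrow> real^'n"
  assumes cf: "cartan_finite A" and T: "T > 0" and cp: "continuous_on {0..<T} p" and c: "c > 0"
    and hc: "c = 1 / integral {0..T} (\<lambda>s. exp (- (p s $ i)))"
  shows BWD_cont: "continuous_on {0..<T} (einf A T i p)"
    and BWD_eq: "\<forall>t\<in>{0..<T}. p t = Tx A i c (einf A T i p) t"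
proof -
  define h where "h = (\<lambda>s. exp (- (p s $ i)))"
  define J where "J = (\<lambda>t. integral {0..t} h)"
  define a where "a = coroot A i"
  have JT: "J T = 1 / c" using hc unfolding J_def h_def by simp
  have hint: "h integrable_on {0..T}"
  proof (rule ccontr)
    assume "\<not> h integrable_on {0..T}"
    then have "J T = 0" unfolding J_def by (rule not_integrable_integral)
    then show False using JT c by simp
  qed
  have ch: "continuous_on {0..<T} h" unfolding h_def by (intro continuous_intros cp)
  have hpos: "h s > 0" for s by (simp add: h_def)
  have Jcont: "continuous_on {0..<T} J" unfolding J_def by (rule int_basic_cont[OF ch])
  have Jder: "(J has_real_derivative h t) (at t)" if "t \<in> {0<..<T}" for t
    unfolding J_def by (rule int_basic_deriv[OF ch that])
  have J0: "J 0 = 0" by (simp add: J_def)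
  have Jlt: "1 - c * J t > 0" if t: "t \<in> {0..<T}" for t
  proof -
    define t' where "t' = (t + T) / 2"
    have tt': "t < t'" "t' < T" using t by (auto simp: t'_def)
    have "J t < J t'"
    proof (rule DERIV_pos_imp_increasing_open[OF tt'(1)])
      fix x assume "t < x" "x < t'"
      then show "\<exists>y. (J has_real_derivative y) (at x) \<and> y > 0"
        using t tt' by (intro exI[of _ "h x"]) (auto intro: Jder hpos)
    next
      show "continuous_on {t..t'} J" by (rule continuous_on_subset[OF Jcont]) (use t tt' in auto)
    qed
    moreover have "J t' \<le> J T"
    proof -
      have "integral {0..t'} h + integral {t'..T} h = integral {0..T} h"
        by (rule Henstock_Kurzweil_Integration.integral_combine) (use t tt' hint in auto)
      moreover have "integral {t'..T} h \<ge> 0"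
        by (rule integral_nonneg[OF integrable_subinterval_real[OF hint]]) (use t tt' hpos in \<open>auto simp: less_imp_le\<close>)
      ultimately show ?thesis unfolding J_def by simp
    qed
    ultimately have "J t < 1 / c" using JT by simp
    then show ?thesis using c by (simp add: field_simps)
  qed
  have einfe: "einf A T i p = (\<lambda>t. p t + ln (1 - c * J t) *\<^sub>R a)"
    using JT c by (simp add: einf_def J_def h_def a_def fun_eq_iff mult.commute)
  show "continuous_on {0..<T} (einf A T i p)"
    unfolding einfe by (intro continuous_intros cp Jcont) (use Jlt in \<open>auto simp: less_imp_neq[symmetric]\<close>)
  define q where "q = einf A T i p"
  have qi: "q t $ i = p t $ i + 2 * ln (1 - c * J t)" for t
    by (simp add: q_def einfe a_def coroot_ii[OF cf])
  have expq: "exp (- (q s $ i)) = h s / (1 - c * J s)^2" if "s \<in> {0..<T}" for s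
  proof -
    have "exp (- (q s $ i)) = exp (- (p s $ i)) / exp (ln (1 - c * J s)) ^ 2"
      unfolding qi by (simp add: exp_diff exp_add[symmetric] power2_eq_square)
    then show ?thesis using Jlt[OF that] by (simp add: h_def)
  qed
  define K where "K = (\<lambda>s. J s / (1 - c * J s))"
  have Kder: "(K has_real_derivative exp (- (q s $ i))) (at s)" if "s \<in> {0<..<T}" for s
  proof -
    have s': "s \<in> {0..<T}" using that by auto
    have "(K has_real_derivative (h s * (1 - c * J s) - J s * (0 - c * h s)) / (1 - c * J s)^2) (at s)"
      unfolding K_def using Jlt[OF s']
      by (auto intro!: derivative_eq_intros Jder[OF that] simp: power2_eq_square)
    moreover have "(h s * (1 - c * J s) - J s * (0 - c * h s)) / (1 - c * J s)^2 = exp (- (q s $ i))"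
      unfolding expq[OF s'] by (simp add: algebra_simps)
    ultimately show ?thesis by simp
  qed
  have Kcont: "continuous_on {0..<T} K"
    unfolding K_def by (intro continuous_intros Jcont) (use Jlt in \<open>auto simp: less_imp_neq[symmetric]\<close>)
  have K0: "K 0 = 0" by (simp add: K_def J0)
  have It: "integral {0..t} (\<lambda>s. exp (- (q s $ i))) = K t" if "t \<in> {0..<T}" for t
  proof -
    have "((\<lambda>s. exp (- (q s $ i))) has_integral (K t - K 0)) {0..t}"
      by (rule ftc0) (use that in \<open>auto intro: continuous_on_subset[OF Kcont] Kder\<close>)
    then show ?thesis using K0 by (simp add: integral_unique)
  qed
  show "\<forall>t\<in>{0..<T}. p t = Tx A i c (einf A T i p) t"
  proof
    fix t assume t: "t \<in> {0..<T}"
    have "1 + c * K t = 1 / (1 - c * J t)" using c Jlt[OF t] by (simp add: K_def field_simps)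
    then have "ln (1 + c * K t) = - ln (1 - c * J t)" using Jlt[OF t] by (simp add: ln_div)
    then show "p t = Tx A i c (einf A T i p) t"
      unfolding Tx_def q_def[symmetric] It[OF t] by (simp add: q_def einfe a_def)
  qed
qed


lemma einf_cong:
  assumes "\<forall>t\<in>{0..<T}. q1 t = q2 t"
  shows "\<forall>t\<in>{0..<T}. einf A T i q1 t = einf A T i q2 t"
proof
  fix t assume t: "t \<in> {0..<T}"
  have i1: "integral {0..t} (\<lambda>s. exp (- (q1 s $ i))) = integral {0..t} (\<lambda>s. exp (- (q2 s $ i)))"
    by (rule integral_cong) (use assms t in auto)
  have i2: "integral {0..T} (\<lambda>s. exp (- (q1 s $ i))) = integral {0..T} (\<lambda>s. exp (- (q2 s $ i)))"
  proof (rule integral_spike[of "{T}"])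
    fix x assume "x \<in> {0..T} - {T}"
    then have "x \<in> {0..<T}" by (auto simp: less_le)
    then show "exp (- (q2 x $ i)) = exp (- (q1 x $ i))" using assms by simp
  qed simp
  show "einf A T i q1 t = einf A T i q2 t" unfolding einf_def i1 i2 using assms t by simp
qed

lemma int_cong_T:
  fixes T :: real
  assumes "\<forall>t\<in>{0..<T}. q1 t = q2 t"
  shows "integral {0..T} (\<lambda>s. exp (- (q1 s $ i))) = integral {0..T} (\<lambda>s. exp (- (q2 s $ i)))"
proof (rule integral_spike[of "{T}"])
  fix x assume "x \<in> {0..T} - {T}"
  then have "x \<in> {0..<T}" by (auto simp: less_le)
  then show "exp (- (q2 x $ i)) = exp (- (q1 x $ i))" using assms by simp
qed simp

lemma Tx_cong:
  assumes "\<forall>t\<in>{0..<T}. q1 t = q2 t"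
  shows "\<forall>t\<in>{0..<T}. Tx A i c q1 t = Tx A i c q2 t"
proof
  fix t assume t: "t \<in> {0..<T}"
  have i1: "integral {0..t} (\<lambda>s. exp (- (q1 s $ i))) = integral {0..t} (\<lambda>s. exp (- (q2 s $ i)))"
    by (rule integral_cong) (use assms t in auto)
  show "Tx A i c q1 t = Tx A i c q2 t" unfolding Tx_def i1 using assms t by simp
qed

lemma einf_word_Suc:
  "j < length ws \<Longrightarrow> einf_word A T (take (Suc j) ws) p = einf A T (ws ! j) (einf_word A T (take j ws) p)"
  by (simp add: einf_word_def take_Suc_conv_app_nth)

theorem mainTheorem19:
  fixes A :: "real^'n^'n" and T :: real and \<eta> :: "real \<Rightarrow> real^'n"
    and w0 :: "real^'n \<Rightarrow> real^'n" and ws :: "'n list" and ts :: "real list"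
  assumes "cartan_finite A"
    and "T > 0"
    and "is_longest A w0"
    and "low_path A T w0 \<eta>"
    and "wmap A ws = w0" and "length ws = wlen A w0"
    and "length ts = length ws" and "\<forall>c\<in>set ts. c > 0"
  shows "\<exists>p. sol_cond A T ws ts \<eta> p \<and> (\<forall>t\<in>{0..<T}. p t = Tz A (zip ws ts) \<eta> t) \<and>
             (\<forall>q. sol_cond A T ws ts \<eta> q \<longrightarrow> (\<forall>t\<in>{0..T}. q t = p t))"
proof -
  note cf = assms(1) and T = assms(2) and lp = assms(4) and w0 = assms(5) and red0 = assms(6)
    and lts = assms(7) and tpos0 = assms(8)
  define m where "m = length ws"
  define zs where "zs = zip ws ts"
  define \<zeta> where "\<zeta> = (\<lambda>j. Tz A (drop j zs) \<eta>)"
  define rate where "rate = (\<lambda>j. rhov - wmap A (rev (take j ws)) rhov)"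
  have red: "length ws = wlen A (wmap A ws)" using red0 w0 by simp
  have lzs: "length zs = m" using lts by (simp add: zs_def m_def)
  have tpos: "ts ! j > 0" if "j < m" for j using tpos0 that lts by (simp add: m_def)
  have \<zeta>step: "\<zeta> j = Tx A (ws ! j) (ts ! j) (\<zeta> (Suc j))" if "j < m" for j
  proof -
    have "drop j zs = zs ! j # drop (Suc j) zs" using that lzs by (simp add: Cons_nth_drop_Suc)
    moreover have "zs ! j = (ws ! j, ts ! j)" using that lts by (simp add: zs_def m_def)
    ultimately show ?thesis by (simp add: \<zeta>_def)
  qed
  have \<zeta>m: "\<zeta> m = \<eta>" using lzs by (simp add: \<zeta>_def)
  have invw: "inv w0 = wmap A (rev ws)"
    unfolding w0[symmetric] by (rule inv_equality) (simp_all add: wmap_rev1[OF cf] wmap_rev2[OF cf])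
  have D: "continuous_on {0..<T} (\<zeta> j) \<and> \<zeta> j 0 = 0 \<and>
           (\<exists>C. ((\<lambda>t. \<zeta> j t - (C + ln (T - t) *\<^sub>R rate j)) \<longlongrightarrow> 0) (at_left T))" if "j \<le> m" for j
    using that
  proof (induction "m - j" arbitrary: j)
    case 0
    then have jm: "j = m" by simp
    obtain C where C: "((\<lambda>t. \<eta> t - (C + ln (T - t) *\<^sub>R (rhov - inv w0 rhov) + cconst A w0)) \<longlongrightarrow> 0) (at_left T)"
      and c1: "continuous_on {0..<T} \<eta>" and c2: "\<eta> 0 = 0"
      using lp unfolding low_path_def by blast
    have rm: "rate m = rhov - inv w0 rhov" by (simp add: rate_def invw m_def)
    have "((\<lambda>t. \<zeta> j t - ((C + cconst A w0) + ln (T - t) *\<^sub>R rate j)) \<longlongrightarrow> 0) (at_left T)"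
      using C unfolding jm \<zeta>m rm by (simp add: algebra_simps)
    then show ?case using c1 c2 jm \<zeta>m by auto
  next
    case (Suc d)
    then have jm: "j < m" and d: "d = m - Suc j" by auto
    from Suc.hyps(1)[OF d] jm obtain C where
      cs: "continuous_on {0..<T} (\<zeta> (Suc j))" and z0: "\<zeta> (Suc j) 0 = 0"
      and as: "((\<lambda>t. \<zeta> (Suc j) t - (C + ln (T - t) *\<^sub>R rate (Suc j))) \<longlongrightarrow> 0) (at_left T)"
      by auto
    define i where "i = ws ! j"
    define y where "y = wmap A (rev (take j ws)) rhov"
    have hy: "y $ i > 0" unfolding y_def i_def by (rule h_pos[OF cf red jm[unfolded m_def]])
    have rs: "rate (Suc j) = rhov - sref A i y"
      using jm by (simp add: rate_def y_def i_def take_Suc_conv_app_nth m_def)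
    have ri: "rate (Suc j) $ i = 1 + y $ i" unfolding rs by (simp add: sref_i[OF cf] rhov_def)
    have rj: "rate (Suc j) - (rate (Suc j) $ i - 1) *\<^sub>R coroot A i = rate j"
      unfolding ri unfolding rs by (simp add: rate_def y_def sref_def)
    have b: "rate (Suc j) $ i > 1" using ri hy by simp
    have e: "\<zeta> j = Tx A i (ts ! j) (\<zeta> (Suc j))" using \<zeta>step[OF jm] by (simp add: i_def)
    show ?case
      unfolding e using FWD_cont[OF cf T tpos[OF jm] cs as b] FWD_0[OF cf T tpos[OF jm] cs as b]
        FWD_asy[OF cf T tpos[OF jm] cs as b] z0 rj by auto
  qed
  have E: "(\<forall>t\<in>{0..<T}. einf A T (ws ! j) (\<zeta> j) t = \<zeta> (Suc j) t) \<and>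
           integral {0..T} (\<lambda>s. exp (- (\<zeta> j s $ (ws ! j)))) = 1 / (ts ! j)" if jm: "j < m" for j
  proof -
    from D[of "Suc j"] jm obtain C where
      cs: "continuous_on {0..<T} (\<zeta> (Suc j))"
      and as: "((\<lambda>t. \<zeta> (Suc j) t - (C + ln (T - t) *\<^sub>R rate (Suc j))) \<longlongrightarrow> 0) (at_left T)"
      by auto
    define i where "i = ws ! j"
    define y where "y = wmap A (rev (take j ws)) rhov"
    have hy: "y $ i > 0" unfolding y_def i_def by (rule h_pos[OF cf red jm[unfolded m_def]])
    have rs: "rate (Suc j) = rhov - sref A i y"
      using jm by (simp add: rate_def y_def i_def take_Suc_conv_app_nth m_def)
    have ri: "rate (Suc j) $ i = 1 + y $ i" unfolding rs by (simp add: sref_i[OF cf] rhov_def)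
    have b: "rate (Suc j) $ i > 1" using ri hy by simp
    have e: "\<zeta> j = Tx A i (ts ! j) (\<zeta> (Suc j))" using \<zeta>step[OF jm] by (simp add: i_def)
    show ?thesis
      unfolding e i_def[symmetric] using FWD_einf[OF cf T tpos[OF jm] cs as b] FWD_int[OF cf T tpos[OF jm] cs as b]
      by auto
  qed
  obtain C0 where C0: "((\<lambda>t. \<zeta> 0 t - (C0 + ln (T - t) *\<^sub>R rate 0)) \<longlongrightarrow> 0) (at_left T)"
    and cz0: "continuous_on {0..<T} (\<zeta> 0)" and zz0: "\<zeta> 0 0 = 0"
    using D[of 0] by auto
  have r0: "rate 0 = 0" by (simp add: rate_def)
  have lim0: "(\<zeta> 0 \<longlongrightarrow> C0) (at_left T)"
  proof -
    have "((\<lambda>t. (\<zeta> 0 t - C0) + C0) \<longlongrightarrow> 0 + C0) (at_left T)"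
      using C0 unfolding r0 by (intro tendsto_intros) simp
    then show ?thesis by simp
  qed
  define p where "p = (\<lambda>t. if t < T then \<zeta> 0 t else C0)"
  have pc: "continuous_on {0..T} p" unfolding p_def by (rule cont_extend[OF T cz0 lim0])
  have p0: "p 0 = 0" using T zz0 by (simp add: p_def)
  have pz: "\<forall>t\<in>{0..<T}. p t = \<zeta> 0 t" by (simp add: p_def)
  have W: "\<forall>t\<in>{0..<T}. einf_word A T (take j ws) p t = \<zeta> j t" if "j \<le> m" for j
    using that
  proof (induction j)
    case 0 then show ?case using pz by (simp add: einf_word_def)
  next
    case (Suc j)
    then have jm: "j < m" by simp
    have "\<forall>t\<in>{0..<T}. einf A T (ws ! j) (einf_word A T (take j ws) p) t = einf A T (ws ! j) (\<zeta> j) t"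
      by (rule einf_cong) (use Suc in simp)
    then show ?case using E[OF jm] einf_word_Suc[of j ws A T p] jm by (simp add: m_def)
  qed
  have sc: "sol_cond A T ws ts \<eta> p"
    unfolding sol_cond_def
  proof (intro conjI pc p0 ballI allI impI)
    fix t assume "t \<in> {0..<T}"
    then show "einf_word A T ws p t = \<eta> t" using W[of m] \<zeta>m by (simp add: m_def)
  next
    fix j assume jm: "j < length ws"
    have "integral {0..T} (\<lambda>s. exp (- (einf_word A T (take j ws) p s $ (ws ! j)))) = integral {0..T} (\<lambda>s. exp (- (\<zeta> j s $ (ws ! j))))"
      by (rule int_cong_T) (use W[of j] jm in \<open>simp add: m_def\<close>)
    also have "\<dots> = 1 / (ts ! j)" using E[of j] jm by (simp add: m_def)
    finally show "ts ! j = 1 / integral {0..T} (\<lambda>s. exp (- (einf_word A T (take j ws) p s $ (ws ! j))))"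
      by simp
  qed
  have uniq: "\<forall>t\<in>{0..T}. q t = p t" if sq: "sol_cond A T ws ts \<eta> q" for q
  proof -
    define qj where "qj = (\<lambda>j. einf_word A T (take j ws) q)"
    have qc: "continuous_on {0..T} q" and q0: "q 0 = 0"
      and qe: "\<forall>t\<in>{0..<T}. einf_word A T ws q t = \<eta> t"
      and qt: "\<And>j. j < m \<Longrightarrow> ts ! j = 1 / integral {0..T} (\<lambda>s. exp (- (qj j s $ (ws ! j))))"
      using sq unfolding sol_cond_def qj_def m_def by auto
    have qjS: "qj (Suc j) = einf A T (ws ! j) (qj j)" if "j < m" for j
      unfolding qj_def using einf_word_Suc[of j ws A T q] that by (simp add: m_def)
    have U1: "continuous_on {0..<T} (qj j)" if "j \<le> m" for j
      using that
    proof (induction j)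
      case 0 then show ?case using qc by (auto simp: qj_def einf_word_def intro: continuous_on_subset)
    next
      case (Suc j)
      then have jm: "j < m" by simp
      show ?case unfolding qjS[OF jm]
        by (rule BWD_cont[OF cf T _ tpos[OF jm] qt[OF jm]]) (use Suc in simp)
    qed
    have U2: "\<forall>t\<in>{0..<T}. qj j t = Tx A (ws ! j) (ts ! j) (qj (Suc j)) t" if jm: "j < m" for j
      unfolding qjS[OF jm] by (rule BWD_eq[OF cf T U1 tpos[OF jm] qt[OF jm]]) (use jm in simp)
    have U3: "\<forall>t\<in>{0..<T}. qj j t = \<zeta> j t" if "j \<le> m" for j
      using that
    proof (induction "m - j" arbitrary: j)
      case 0
      then have "j = m" by simp
      then show ?case using qe \<zeta>m by (simp add: qj_def m_def)
    next
      case (Suc d)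
      then have jm: "j < m" and d: "d = m - Suc j" by auto
      have IH: "\<forall>t\<in>{0..<T}. qj (Suc j) t = \<zeta> (Suc j) t" using Suc.hyps(1)[OF d] jm by simp
      have "\<forall>t\<in>{0..<T}. Tx A (ws ! j) (ts ! j) (qj (Suc j)) t = Tx A (ws ! j) (ts ! j) (\<zeta> (Suc j)) t"
        by (rule Tx_cong[OF IH])
      then show ?case using U2[OF jm] \<zeta>step[OF jm] by simp
    qed
    have qp: "\<forall>t\<in>{0..<T}. q t = p t" using U3[of 0] pz by (simp add: qj_def einf_word_def)
    have qT: "q T = p T"
    proof -
      have l1: "(q \<longlongrightarrow> q T) (at_left T)"
        using qc T unfolding continuous_on_def at_within_Icc_at_left[OF T, symmetric] by auto
      have l2: "(p \<longlongrightarrow> p T) (at_left T)"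
        using pc T unfolding continuous_on_def at_within_Icc_at_left[OF T, symmetric] by auto
      have ev: "\<forall>\<^sub>F t in at_left T. p t = q t"
        using eventually_at_left_real[OF T] qp by (auto elim!: eventually_mono)
      have l3: "(q \<longlongrightarrow> p T) (at_left T)"
        using l2 by (rule filterlim_cong[THEN iffD1, rotated 3]) (use ev in auto)
      show ?thesis by (rule tendsto_unique[OF _ l1 l3]) simp
    qed
    show ?thesis using qp qT by auto
  qed
  show ?thesis
  proof (intro exI conjI)
    show "sol_cond A T ws ts \<eta> p" by (rule sc)
    show "\<forall>t\<in>{0..<T}. p t = Tz A (zip ws ts) \<eta> t" using pz by (simp add: \<zeta>_def zs_def)
    show "\<forall>q. sol_cond A T ws ts \<eta> q \<longrightarrow> (\<forall>t\<in>{0..T}. q t = p t)" using uniq by blast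
  qed
qed

end
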